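(* If $\nu\in\left(-1,-\tfrac12\right]$ and $a,b\ge0$, then $$|\mathcal{I}_\nu(a)-\mathcal{I}_\nu(b)|\ge |a-b|\sqrt{\mathcal{I}_\nu'(a)\,\mathcal{I}_\nu'(b)}.$$ Moreover, this inequality holds for every $\nu>-1$ and all $a,b\in\left(0,\sqrt{2(\nu+3)}\right)$.
   Context: For $\nu>-1$ define $\mathcal{I}_\nu:\mathbb{R}\to[1,\infty)$ by $\mathcal{I}_\nu(x)=\sum_{n\ge0}\frac{(1/4)^n}{(\nu+1)_n\, n!}x^{2n}$, where $(a)_n=a(a+1)\cdots(a+n-1)$, $(a)_0=1$. Equivalently $\mathcal{I}_\nu(x)=2^\nu\Gamma(\nu+1)x^{-\nu}I_\nu(x)$ for $x>0$, where $I_\nu$ is the modified Bessel function of the first kind. *)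

theory Defs
  imports "HOL-Analysis.Analysis"
begin

text \<open>Normalized modified Bessel function
  calI nu x = sum_{n>=0} (1/4)^n / ((nu+1)_n n!) x^(2n), intended for nu > -1.\<close>
definition calI :: "real \<Rightarrow> real \<Rightarrow> real" where
  "calI \<nu> x = (\<Sum>n. (1/4) ^ n / (pochhammer (\<nu> + 1) n * fact n) * x ^ (2 * n))"

end

theory Submission
  imports Defs
begin

definition cc :: "real \<Rightarrow> nat \<Rightarrow> real" where
  "cc p n = (1/4)^n / (pochhammer p n * fact n)"

lemma cc_pos: "(p::real) > 0 \<Longrightarrow> cc p n > 0"
  unfolding cc_def by (intro divide_pos_pos mult_pos_pos pochhammer_pos) auto

lemma cc_Suc: "(p::real) > 0 \<Longrightarrow> cc p (Suc n) = cc p n / (4 * real (Suc n) * (p + real n))"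
  unfolding cc_def using pochhammer_pos[of p n]
  by (simp add: pochhammer_rec' field_simps)

lemma summable_cc:
  assumes p: "p > 0"
  shows "summable (\<lambda>n. cc p n * z ^ n)"
proof (rule summable_ratio_test[where c = "1/2" and N = "nat \<lceil>\<bar>z\<bar>\<rceil>"])
  fix n assume n: "n \<ge> nat \<lceil>\<bar>z\<bar>\<rceil>"
  hence zn: "\<bar>z\<bar> \<le> real n" by linarith
  have pos: "cc p n > 0" using cc_pos[OF p] .
  have "norm (cc p (Suc n) * z ^ Suc n) = cc p n * \<bar>z\<bar>^n * (\<bar>z\<bar> / (4 * (Suc n) * (p + n)))"
    using cc_pos[OF p, of "Suc n"] pos p by (simp add: cc_Suc[OF p] abs_mult power_abs field_simps)
  also have "\<dots> \<le> cc p n * \<bar>z\<bar>^n * (1/2)"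
  proof (rule mult_left_mono)
    have "(4 + 4 * real n) * real n \<le> (4 + 4 * real n) * (p + real n)"
      using p by (intro mult_left_mono) auto
    moreover have "2 * real n \<le> (4 + 4 * real n) * real n" by (simp add: algebra_simps)
    ultimately have "\<bar>z\<bar> * 2 \<le> (4 + 4 * real n) * (p + real n)" using zn by linarith
    hence "\<bar>z\<bar> * 2 \<le> (4 * real (Suc n) * (p + n))" by (simp add: algebra_simps)
    thus "\<bar>z\<bar> / (4 * (Suc n) * (p + n)) \<le> 1/2" using p by (simp add: divide_simps) 
  qed (use pos in auto)
  also have "\<dots> = 1/2 * norm (cc p n * z ^ n)" using pos by (simp add: abs_mult power_abs)
  finally show "norm (cc p (Suc n) * z ^ Suc n) \<le> 1/2 * norm (cc p n * z ^ n)" .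
qed auto

definition PS :: "(nat \<Rightarrow> real) \<Rightarrow> real \<Rightarrow> real" where
  "PS a z = (\<Sum>n. a n * z ^ n)"

lemma PS_deriv:
  assumes "\<And>y. summable (\<lambda>n. a n * y ^ n)"
  shows "(PS a has_real_derivative PS (diffs a) z) (at z)"
  unfolding PS_def using termdiffs_strong_converges_everywhere[of a z] assms by simp

lemma PS_shift:
  assumes "\<And>y. summable (\<lambda>n. a n * y ^ n)"
  shows "z * PS (diffs a) z = (\<Sum>n. real n * a n * z ^ n)"
    and "summable (\<lambda>n. real n * a n * z ^ n)"
proof -
  have s: "summable (\<lambda>n. diffs a n * z ^ n)" using termdiff_converges_all[of a z] assms by simp
  have eq: "(\<lambda>n. real (Suc n) * a (Suc n) * z ^ (Suc n)) = (\<lambda>n. z * (diffs a n * z ^ n))"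
    by (auto simp: diffs_def)
  have s2: "summable (\<lambda>n. z * (diffs a n * z ^ n))" using summable_mult[OF s] .
  hence "summable (\<lambda>n. real (Suc n) * a (Suc n) * z ^ (Suc n))" by (simp only: eq)
  thus "summable (\<lambda>n. real n * a n * z ^ n)" using summable_Suc_iff[where f = "\<lambda>n. real n * a n * z ^ n"] by simp
  hence "(\<lambda>n. real n * a n * z ^ n) sums (\<Sum>n. real n * a n * z ^ n)" by (rule summable_sums)
  hence "(\<lambda>n. real (Suc n) * a (Suc n) * z ^ (Suc n)) sums ((\<Sum>n. real n * a n * z ^ n) - 0)"
    using sums_Suc_iff[where f = "\<lambda>n. real n * a n * z ^ n"] by simp
  hence "(\<lambda>n. z * (diffs a n * z ^ n)) sums (\<Sum>n. real n * a n * z ^ n)" by (simp only: eq) simp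
  moreover have "(\<lambda>n. z * (diffs a n * z ^ n)) sums (z * PS (diffs a) z)"
    unfolding PS_def by (rule sums_mult[OF summable_sums[OF s]])
  ultimately show "z * PS (diffs a) z = (\<Sum>n. real n * a n * z ^ n)" using sums_unique2 by blast
qed

definition ee :: "real \<Rightarrow> nat \<Rightarrow> real" where "ee p = diffs (cc p)"
definition dd :: "real \<Rightarrow> nat \<Rightarrow> real" where "dd p = diffs (ee p)"

lemma summable_ee: "p > 0 \<Longrightarrow> summable (\<lambda>n. ee p n * z ^ n)"
  unfolding ee_def by (rule termdiff_converges_all) (rule summable_cc)
lemma summable_dd: "p > 0 \<Longrightarrow> summable (\<lambda>n. dd p n * z ^ n)"
  unfolding dd_def by (rule termdiff_converges_all) (rule summable_ee)
lemma summable_ddd: "p > 0 \<Longrightarrow> summable (\<lambda>n. diffs (dd p) n * z ^ n)"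
  by (rule termdiff_converges_all) (rule summable_dd)

lemma aux_cancel: "(k::real) > 0 \<Longrightarrow> k * (c / (4 * k * y)) = c / (4 * y)"
  by (cases "y = 0") (auto simp: field_simps)

lemma aux_div_mult: "(B::real) \<noteq> 0 \<Longrightarrow> X / B * B = X" by simp

lemma ee_eq: "(p::real) > 0 \<Longrightarrow> ee p n = cc p n / (4 * (p + n))"
proof -
  assume p: "p > 0"
  have h: "p + real n > 0" "real (Suc n) > 0" using p by auto
  have "ee p n = real (Suc n) * (cc p n / (4 * real (Suc n) * (p + real n)))"
    unfolding ee_def diffs_def using p by (simp only: cc_Suc)
  also have "\<dots> = cc p n / (4 * (p + n))" by (rule aux_cancel[OF h(2)])
  finally show ?thesis .
qed

lemma ee_pos: "(p::real) > 0 \<Longrightarrow> ee p n > 0"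
  using ee_eq[of p n] cc_pos[of p n] by simp

lemma dd_eq: "(p::real) > 0 \<Longrightarrow> dd p n * (4 * (p + n + 1)) = ee p n"
proof -
  assume p: "p > 0"
  have h: "p + real n > 0" "p + real n + 1 > 0" "real (Suc n) > 0" using p by auto
  have "dd p n = real (Suc n) * ee p (Suc n)" unfolding dd_def diffs_def by simp
  also have "\<dots> = real (Suc n) * (cc p (Suc n) / (4 * (p + real (Suc n))))" using p by (simp only: ee_eq)
  also have "\<dots> = real (Suc n) * ((cc p n / (4 * real (Suc n) * (p + real n))) / (4 * (p + real (Suc n))))"
    using p by (simp only: cc_Suc)
  also have "\<dots> = (real (Suc n) * (cc p n / (4 * real (Suc n) * (p + real n)))) / (4 * (p + real (Suc n)))"
    by (rule times_divide_eq_right)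
  also have "\<dots> = (cc p n / (4 * (p + real n))) / (4 * (p + real (Suc n)))"
    by (simp only: aux_cancel[OF h(3)])
  finally have e: "dd p n = (cc p n / (4 * (p + real n))) / (4 * (p + real (Suc n)))" .
  have ne: "4 * (p + real (Suc n)) \<noteq> 0" using h by simp
  have "dd p n * (4 * (p + real (Suc n))) = cc p n / (4 * (p + real n))"
    unfolding e by (rule aux_div_mult[OF ne])
  hence "dd p n * (4 * (p + n + 1)) = cc p n / (4 * (p + real n))" by (simp add: algebra_simps)
  thus ?thesis using ee_eq[OF p] by simp
qed

lemma dd_pos: "(p::real) > 0 \<Longrightarrow> dd p n > 0"
  unfolding dd_def diffs_def using ee_pos[of p "Suc n"] by simp

lemma PS_sums: "summable (\<lambda>n. a n * z ^ n) \<Longrightarrow> (\<lambda>n. a n * z ^ n) sums PS a z"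
  unfolding PS_def by (rule summable_sums)

lemma ode:
  assumes p: "(p::real) > 0"
  shows "z * PS (diffs (dd p)) z + (p + 1) * PS (dd p) z = PS (ee p) z / 4"
proof -
  have "z * PS (diffs (dd p)) z = (\<Sum>n. real n * dd p n * z ^ n)"
    by (rule PS_shift(1)) (rule summable_dd[OF p])
  moreover have s1: "summable (\<lambda>n. real n * dd p n * z ^ n)"
    by (rule PS_shift(2)) (rule summable_dd[OF p])
  ultimately have A: "(\<lambda>n. real n * dd p n * z ^ n) sums (z * PS (diffs (dd p)) z)"
    using summable_sums by force
  have B: "(\<lambda>n. (p + 1) * (dd p n * z ^ n)) sums ((p + 1) * PS (dd p) z)"
    by (rule sums_mult) (rule PS_sums[OF summable_dd[OF p]])
  have C: "(\<lambda>n. ee p n * z ^ n / 4) sums (PS (ee p) z / 4)"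
    by (rule sums_divide) (rule PS_sums[OF summable_ee[OF p]])
  have "(\<lambda>n. real n * dd p n * z ^ n + (p + 1) * (dd p n * z ^ n)) sums
        (z * PS (diffs (dd p)) z + (p + 1) * PS (dd p) z)" by (rule sums_add[OF A B])
  moreover have "(\<lambda>n. real n * dd p n * z ^ n + (p + 1) * (dd p n * z ^ n)) = (\<lambda>n. ee p n * z ^ n / 4)"
  proof
    fix n
    have "real n * dd p n * z ^ n + (p + 1) * (dd p n * z ^ n) = (dd p n * (4 * (p + n + 1))) * z ^ n / 4"
      by (simp add: algebra_simps)
    also have "\<dots> = ee p n * z ^ n / 4" by (simp only: dd_eq[OF p])
    finally show "real n * dd p n * z ^ n + (p + 1) * (dd p n * z ^ n) = ee p n * z ^ n / 4" .
  qed
  ultimately show ?thesis using C sums_unique2 by metis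
qed

lemma ratio_bound:
  assumes p: "(p::real) > 0" and z: "z \<ge> 0"
  shows "PS (dd p) z * (4 * (p + 1) * (p + 2) + z) \<ge> (p + 2) * PS (ee p) z"
proof -
  have zs: "z * PS (dd p) z = (\<Sum>n. real n * ee p n * z ^ n)"
    unfolding dd_def by (rule PS_shift(1)) (rule summable_ee[OF p])
  have s1: "summable (\<lambda>n. real n * ee p n * z ^ n)"
    by (rule PS_shift(2)) (rule summable_ee[OF p])
  have A: "(\<lambda>n. real n * ee p n * z ^ n) sums (z * PS (dd p) z)" using zs s1 summable_sums by force
  have B: "(\<lambda>n. 4 * (p + 1) * (p + 2) * (dd p n * z ^ n)) sums (4 * (p + 1) * (p + 2) * PS (dd p) z)"
    by (rule sums_mult) (rule PS_sums[OF summable_dd[OF p]])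
  have C: "(\<lambda>n. (p + 2) * (ee p n * z ^ n)) sums ((p + 2) * PS (ee p) z)"
    by (rule sums_mult) (rule PS_sums[OF summable_ee[OF p]])
  have D: "(\<lambda>n. 4 * (p + 1) * (p + 2) * (dd p n * z ^ n) + real n * ee p n * z ^ n - (p + 2) * (ee p n * z ^ n))
     sums (4 * (p + 1) * (p + 2) * PS (dd p) z + z * PS (dd p) z - (p + 2) * PS (ee p) z)"
    by (intro sums_diff sums_add A B C)
  have "0 \<le> 4 * (p + 1) * (p + 2) * PS (dd p) z + z * PS (dd p) z - (p + 2) * PS (ee p) z"
  proof (rule sums_le[OF _ sums_zero D])
    fix n
    have e: "ee p n = dd p n * (4 * (p + n + 1))" using dd_eq[OF p] by simp
    have "4 * (p + 1) * (p + 2) * (dd p n * z ^ n) + real n * ee p n * z ^ n - (p + 2) * (ee p n * z ^ n)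
       = 4 * dd p n * z ^ n * (real n * (real n - 1))" unfolding e by (simp add: algebra_simps)
    moreover have "real n * (real n - 1) \<ge> 0" by (cases n) auto
    ultimately show "0 \<le> 4 * (p + 1) * (p + 2) * (dd p n * z ^ n) + real n * ee p n * z ^ n - (p + 2) * (ee p n * z ^ n)"
      using dd_pos[OF p, of n] z by simp
  qed
  thus ?thesis by (simp add: algebra_simps)
qed

lemma PS_pos:
  assumes p: "(p::real) > 0" and z: "z \<ge> 0"
  shows "PS (ee p) z > 0" "PS (dd p) z > 0"
proof -
  show "PS (ee p) z > 0" unfolding PS_def
  proof (rule suminf_pos2[where i=0])
    show "summable (\<lambda>n. ee p n * z ^ n)" by (rule summable_ee[OF p])
    fix n show "0 \<le> ee p n * z ^ n" using ee_pos[OF p, of n] z by simp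
  next
    show "0 < ee p 0 * z ^ 0" using ee_pos[OF p, of 0] by simp
  qed
  show "PS (dd p) z > 0" unfolding PS_def
  proof (rule suminf_pos2[where i=0])
    show "summable (\<lambda>n. dd p n * z ^ n)" by (rule summable_dd[OF p])
    fix n show "0 \<le> dd p n * z ^ n" using dd_pos[OF p, of n] z by simp
  next
    show "0 < dd p 0 * z ^ 0" using dd_pos[OF p, of 0] by simp
  qed
qed

definition JJ :: "real \<Rightarrow> real \<Rightarrow> real" where
  "JJ p z = (1 - z) * (PS (ee p) z)^2 + (4*p+2) * z * PS (ee p) z * PS (dd p) z + 4 * z^2 * (PS (dd p) z)^2"

lemma poly_nonneg:
  assumes p: "(p::real) > 0" and z: "0 \<le> z" "z \<le> 2 * (p + 2)"
  shows "4*z^2*(p+2)^2 + (4*p+2)*z*(p+2)*(4*(p+1)*(p+2)+z) + (1-z)*(4*(p+1)*(p+2)+z)^2 \<ge> 0"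
proof -
  have e: "4*z^2*(p+2)^2 + (4*p+2)*z*(p+2)*(4*(p+1)*(p+2)+z) + (1-z)*(4*(p+1)*(p+2)+z)^2
     = 8*(p+1)^2*(p+2)*(2*(p+2) - z) + z^2*(2*p+5-z)"
    by (simp add: algebra_simps power2_eq_square)
  have "8*(p+1)^2*(p+2)*(2*(p+2) - z) \<ge> 0" using p z by (intro mult_nonneg_nonneg) auto
  moreover have "z^2*(2*p+5-z) \<ge> 0" using p z by (intro mult_nonneg_nonneg) auto
  ultimately show ?thesis unfolding e by linarith
qed

lemma JJ_small:
  assumes p: "(p::real) > 0" and z: "0 \<le> z" "z \<le> 2 * (p + 2)"
  shows "JJ p z \<ge> 0"
proof -
  define f where "f = PS (ee p) z"
  define g where "g = PS (dd p) z"
  define D where "D = 4*(p+1)*(p+2)+z"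
  have fpos: "f > 0" unfolding f_def using PS_pos[OF p z(1)] by simp
  have Dpos: "D > 0" unfolding D_def using p z by (simp add: add_pos_nonneg)
  have r: "g * D \<ge> (p+2) * f" unfolding f_def g_def D_def using ratio_bound[OF p z(1)] .
  define X where "X = z * g * D"
  define Y where "Y = z * (p+2) * f"
  have Y0: "Y \<ge> 0" unfolding Y_def using z p fpos by simp
  have XY: "X \<ge> Y" unfolding X_def Y_def using mult_left_mono[OF r z(1)] by (simp add: algebra_simps)
  have "JJ p z * D^2 = 4 * X^2 + (4*p+2) * X * f * D + (1 - z) * f^2 * D^2"
    unfolding JJ_def X_def f_def g_def by (simp add: algebra_simps power2_eq_square)
  also have "\<dots> \<ge> 4 * Y^2 + (4*p+2) * Y * f * D + (1 - z) * f^2 * D^2"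
  proof -
    have "X^2 \<ge> Y^2" using XY Y0 by (simp add: power_mono)
    moreover have "(4*p+2) * f * D * X \<ge> (4*p+2) * f * D * Y"
      using XY p fpos Dpos by (intro mult_left_mono) auto
    ultimately show ?thesis by (simp add: algebra_simps)
  qed
  also have "4 * Y^2 + (4*p+2) * Y * f * D + (1 - z) * f^2 * D^2
     = f^2 * (4*z^2*(p+2)^2 + (4*p+2)*z*(p+2)*(4*(p+1)*(p+2)+z) + (1-z)*(4*(p+1)*(p+2)+z)^2)"
    unfolding Y_def D_def by (simp add: algebra_simps power2_eq_square)
  finally have "JJ p z * D^2 \<ge> 0" using poly_nonneg[OF p z] by (meson order_trans zero_le_mult_iff zero_le_power2)
  thus ?thesis using Dpos by (simp add: zero_le_mult_iff)
qed

lemma PS_ee_deriv[derivative_intros]: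
  assumes p: "(p::real) > 0" and "(h has_real_derivative h') (at x within S)"
  shows "((\<lambda>x. PS (ee p) (h x)) has_real_derivative PS (dd p) (h x) * h') (at x within S)"
proof -
  have "(PS (ee p) has_real_derivative PS (dd p) (h x)) (at (h x))"
    unfolding dd_def by (rule PS_deriv) (rule summable_ee[OF p])
  from DERIV_chain2[OF this assms(2)] show ?thesis .
qed

lemma PS_dd_deriv[derivative_intros]:
  assumes p: "(p::real) > 0" and "(h has_real_derivative h') (at x within S)"
  shows "((\<lambda>x. PS (dd p) (h x)) has_real_derivative PS (diffs (dd p)) (h x) * h') (at x within S)"
proof -
  have "(PS (dd p) has_real_derivative PS (diffs (dd p)) (h x)) (at (h x))"
    by (rule PS_deriv) (rule summable_dd[OF p])
  from DERIV_chain2[OF this assms(2)] show ?thesis .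
qed

lemma JJ_large:
  assumes p: "(p::real) > 0" "p \<le> 1/2" and z: "z \<ge> 2 * (p + 2)"
  shows "JJ p z \<ge> 0"
proof -
  define z0 where "z0 = 2 * (p + 2)"
  define k where "k = (1 - 2 * p) / 2"
  have k0: "k \<ge> 0" unfolding k_def using p by simp
  have z0pos: "z0 > 0" unfolding z0_def using p by simp
  define L where "L = (\<lambda>t. t powr (-k) * JJ p t)"
  have "L z0 \<le> L z"
  proof (rule DERIV_nonneg_imp_nondecreasing[of z0 z L])
    show "z0 \<le> z" using z z0_def by simp
    fix t assume t: "z0 \<le> t" "t \<le> z"
    have tpos: "t > 0" using t z0pos by simp
    define f where "f = PS (ee p) t"
    define g where "g = PS (dd p) t"
    define h where "h = PS (diffs (dd p)) t"
    define J' where "J' = (1 - t) * (2 * f * g) - f^2 + (4*p+2) * (f * g + t * g * g + t * f * h)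
        + 8 * t * g^2 + 4 * t^2 * (2 * g * h)"
    have dJ: "(JJ p has_real_derivative J') (at t)"
      unfolding JJ_def[abs_def] J'_def f_def g_def h_def
      apply (rule derivative_eq_intros | rule p(1) | rule DERIV_ident | rule refl)+
      apply (simp add: algebra_simps power2_eq_square)
      done
    have dL: "(L has_real_derivative (-k) * t powr (-k - 1) * JJ p t + t powr (-k) * J') (at t)"
      unfolding L_def using DERIV_mult[OF has_real_derivative_powr[OF tpos, of "-k"] dJ] by (simp add: algebra_simps)
    have ode': "h = (f / 4 - (p + 1) * g) / t"
      using ode[OF p(1), of t] tpos unfolding f_def g_def h_def by (simp add: field_simps)
    have th: "t * h = f / 4 - (p + 1) * g"
      using ode[OF p(1), of t] unfolding f_def g_def h_def by (simp add: algebra_simps)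
    have tJ: "t * J' = t * ((1 - t) * (2 * f * g) - f^2 + (4*p+2) * (f * g + t * g * g) + 8 * t * g^2)
         + (4*p+2) * t * f * (t * h) + 8 * t^2 * g * (t * h)"
      unfolding J'_def by (simp add: algebra_simps power2_eq_square)
    have JJt: "JJ p t = (1 - t) * f^2 + (4*p+2) * t * f * g + 4 * t^2 * g^2"
      unfolding JJ_def f_def g_def by simp
    have key: "t * J' - k * JJ p t = k * f * (2 * t * g - f)"
      unfolding tJ th JJt k_def by (simp add: field_simps power2_eq_square)
    have fpos: "f > 0" and gpos: "g > 0" unfolding f_def g_def using PS_pos[OF p(1), of t] tpos by auto
    have "2 * t * g \<ge> f"
    proof -
      define A where "A = 4 * (p + 1) * (p + 2) + t"
      have Apos: "A > 0" unfolding A_def using p tpos by (simp add: add_pos_pos)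
      have r: "g * A \<ge> (p + 2) * f"
        unfolding f_def g_def A_def using ratio_bound[OF p(1), of t] tpos by simp
      have c0: "(2*(p+2))*(2*p+3) \<le> t*(2*p+3)" using t(1) p unfolding z0_def by (intro mult_right_mono) auto
      have c: "2 * t * (p + 2) \<ge> A"
        using c0 p unfolding A_def by (simp add: algebra_simps)
      have "(2 * t) * (g * A) \<ge> (2 * t) * ((p + 2) * f)" using r tpos by (intro mult_left_mono) auto
      moreover have "(2 * t * (p + 2)) * f \<ge> A * f" using c fpos by (intro mult_right_mono) auto
      ultimately have "(2 * t * g - f) * A \<ge> 0" by (simp add: algebra_simps)
      thus ?thesis using Apos by (simp add: zero_le_mult_iff)
    qed
    hence "k * f * (2 * t * g - f) \<ge> 0" using k0 fpos by simp
    hence "t * J' - k * JJ p t \<ge> 0" using key by simp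
    moreover have "(-k) * t powr (-k - 1) * JJ p t + t powr (-k) * J' = t powr (-k - 1) * (t * J' - k * JJ p t)"
    proof -
      have "t powr (-k) = t powr ((-k - 1) + 1)" by simp
      also have "\<dots> = t powr (-k - 1) * t powr 1" by (rule powr_add)
      finally have e: "t powr (-k) = t powr (-k - 1) * t" using tpos by simp
      show ?thesis unfolding e by (simp add: algebra_simps)
    qed
    ultimately show "\<exists>y. (L has_real_derivative y) (at t) \<and> 0 \<le> y" using dL tpos by fastforce
  qed
  moreover have "L z0 \<ge> 0" unfolding L_def using JJ_small[OF p(1), of z0] z0pos unfolding z0_def by simp
  ultimately have "L z \<ge> 0" by simp
  thus ?thesis unfolding L_def using z z0pos z0_def by (simp add: zero_le_mult_iff)
qed

lemma PS_cc_deriv[derivative_intros]: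
  assumes p: "(p::real) > 0" and "(h has_real_derivative h') (at x within S)"
  shows "((\<lambda>x. PS (cc p) (h x)) has_real_derivative PS (ee p) (h x) * h') (at x within S)"
proof -
  have "(PS (cc p) has_real_derivative PS (ee p) (h x)) (at (h x))"
    unfolding ee_def by (rule PS_deriv) (rule summable_cc[OF p])
  from DERIV_chain2[OF this assms(2)] show ?thesis .
qed

lemma calI_eq: "calI \<nu> x = PS (cc (\<nu> + 1)) (x^2)"
  unfolding calI_def PS_def cc_def by (simp add: power_mult)

lemma calI_deriv:
  assumes "\<nu> > -1"
  shows "(calI \<nu> has_real_derivative 2 * x * PS (ee (\<nu>+1)) (x^2)) (at x)"
proof -
  have p: "\<nu> + 1 > 0" using assms by simp
  have "((\<lambda>x. PS (cc (\<nu> + 1)) (x^2)) has_real_derivative PS (ee (\<nu>+1)) (x^2) * (2 * x)) (at x)"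
    by (rule derivative_eq_intros | rule p | rule DERIV_ident | rule refl)+ simp
  thus ?thesis unfolding calI_eq[abs_def] by (simp add: mult.commute mult.left_commute)
qed

lemma main_ineq:
  assumes p: "(p::real) > 0" and ab: "0 < a" "a < b"
    and J: "\<And>x. a \<le> x \<Longrightarrow> x \<le> b \<Longrightarrow> JJ p (x^2) \<ge> 0"
  defines "F \<equiv> (\<lambda>x. PS (cc p) (x^2))" and "G \<equiv> (\<lambda>x. 2 * x * PS (ee p) (x^2))"
  shows "F b - F a \<ge> (b - a) * sqrt (G a * G b)"
proof -
  have Gpos: "G x > 0" if "x > 0" for x unfolding G_def using PS_pos[OF p, of "x^2"] that by simp
  define v where "v = (\<lambda>x. - ln (G x))"
  define v' where "v' = (\<lambda>x. - (1/x + 2 * x * PS (dd p) (x^2) / PS (ee p) (x^2)))"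
  define v'' where "v'' = (\<lambda>x. 1/x^2 - (PS (dd p) (x^2) * 2 + 2 * x * (PS (diffs (dd p)) (x^2) * (2 * x))) / PS (ee p) (x^2)
       + (2 * x * PS (dd p) (x^2)) * (PS (dd p) (x^2) * (2 * x)) / (PS (ee p) (x^2))^2)"
  have conv: "convex_on {a..b} v"
  proof (rule f''_ge0_imp_convex[where f' = v' and f'' = v''])
    show "convex {a..b}" by simp
  next
    fix x assume x: "x \<in> {a..b}"
    hence xpos: "x > 0" using ab by simp
    have fpos: "PS (ee p) (x^2) > 0" using PS_pos[OF p, of "x^2"] by simp
    have dG: "(G has_real_derivative 2 * PS (ee p) (x^2) + 2 * x * (PS (dd p) (x^2) * (2 * x))) (at x)"
      unfolding G_def by (rule derivative_eq_intros | rule p | rule DERIV_ident | rule refl)+ simp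
    have "(v has_real_derivative - ((2 * PS (ee p) (x^2) + 2 * x * (PS (dd p) (x^2) * (2 * x))) / G x)) (at x)"
      unfolding v_def using DERIV_chain2[OF DERIV_ln_divide[OF Gpos[OF xpos]] dG]
      by (intro DERIV_minus) (simp add: divide_inverse mult.commute)
    moreover have "- ((2 * PS (ee p) (x^2) + 2 * x * (PS (dd p) (x^2) * (2 * x))) / G x) = v' x"
      unfolding v'_def G_def using xpos fpos by (simp add: field_simps power2_eq_square)
    ultimately show "(v has_real_derivative v' x) (at x)" by simp
    have d1: "((\<lambda>x. 1 / x) has_real_derivative (0 * x - 1 * 1) / (x * x)) (at x)"
      using xpos by (intro DERIV_divide DERIV_const DERIV_ident) auto
    have dN: "((\<lambda>x. 2 * x * PS (dd p) (x^2)) has_real_derivative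
        2 * PS (dd p) (x^2) + 2 * x * (PS (diffs (dd p)) (x^2) * (2 * x))) (at x)"
      by (rule derivative_eq_intros | rule p | rule DERIV_ident | rule refl)+ simp
    have dD: "((\<lambda>x. PS (ee p) (x^2)) has_real_derivative PS (dd p) (x^2) * (2 * x)) (at x)"
      by (rule derivative_eq_intros | rule p | rule DERIV_ident | rule refl)+ simp
    have dQ: "((\<lambda>x. 2 * x * PS (dd p) (x^2) / PS (ee p) (x^2)) has_real_derivative
        ((2 * PS (dd p) (x^2) + 2 * x * (PS (diffs (dd p)) (x^2) * (2 * x))) * PS (ee p) (x^2)
          - 2 * x * PS (dd p) (x^2) * (PS (dd p) (x^2) * (2 * x))) / (PS (ee p) (x^2) * PS (ee p) (x^2))) (at x)"
      using fpos by (intro DERIV_divide dN dD) auto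
    have "(v' has_real_derivative - ((0 * x - 1 * 1) / (x * x) + ((2 * PS (dd p) (x^2) + 2 * x * (PS (diffs (dd p)) (x^2) * (2 * x))) * PS (ee p) (x^2)
          - 2 * x * PS (dd p) (x^2) * (PS (dd p) (x^2) * (2 * x))) / (PS (ee p) (x^2) * PS (ee p) (x^2)))) (at x)"
      unfolding v'_def by (intro DERIV_minus DERIV_add d1 dQ)
    moreover have "- ((0 * x - 1 * 1) / (x * x) + ((2 * PS (dd p) (x^2) + 2 * x * (PS (diffs (dd p)) (x^2) * (2 * x))) * PS (ee p) (x^2)
          - 2 * x * PS (dd p) (x^2) * (PS (dd p) (x^2) * (2 * x))) / (PS (ee p) (x^2) * PS (ee p) (x^2))) = v'' x"
      unfolding v''_def using xpos fpos by (simp add: field_simps power2_eq_square)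
    ultimately have "(v' has_real_derivative v'' x) (at x)" by simp
    thus "(v' has_real_derivative v'' x) (at x)" .
    show "v'' x \<ge> 0"
    proof -
      define f where "f = PS (ee p) (x^2)"
      define g where "g = PS (dd p) (x^2)"
      define h where "h = PS (diffs (dd p)) (x^2)"
      have f0: "f > 0" unfolding f_def using fpos .
      have th: "x^2 * h = f / 4 - (p + 1) * g"
        using ode[OF p, of "x^2"] unfolding f_def g_def h_def by (simp add: algebra_simps)
      have JJx: "JJ p (x^2) = (1 - x^2) * f^2 + (4*p+2) * x^2 * f * g + 4 * (x^2)^2 * g^2"
        unfolding JJ_def f_def g_def by simp
      have "v'' x * (x^2 * f^2) = f^2 - 2 * x^2 * f * g - 4 * x^2 * f * (x^2 * h) + 4 * (x^2)^2 * g^2"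
        unfolding v''_def f_def[symmetric] g_def[symmetric] h_def[symmetric] using xpos f0
        by (simp add: field_simps power2_eq_square)
      also have "\<dots> = JJ p (x^2)" unfolding th JJx by (simp add: field_simps power2_eq_square)
      finally have "v'' x * (x^2 * f^2) \<ge> 0" using J[of x] x by simp
      moreover have "x^2 * f^2 > 0" using xpos fpos unfolding f_def by simp
      ultimately show ?thesis by (simp add: zero_le_mult_iff)
    qed
  qed
  have prod: "G t * G (a + b - t) \<ge> G a * G b" if t: "a \<le> t" "t \<le> b" for t
  proof -
    define l where "l = (t - a) / (b - a)"
    have l: "0 \<le> l" "l \<le> 1" unfolding l_def using t ab by auto
    have lb: "l * (b - a) = t - a" unfolding l_def using ab by simp
    have te: "t = (1 - l) *\<^sub>R a + l *\<^sub>R b" using lb by (simp add: algebra_simps)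
    have se: "a + b - t = (1 - (1 - l)) *\<^sub>R a + (1 - l) *\<^sub>R b" using lb by (simp add: algebra_simps)
    have A: "a \<in> {a..b}" "b \<in> {a..b}" using ab by auto
    have "v t \<le> (1 - l) * v a + l * v b" unfolding te by (rule convex_onD[OF conv]) (use l A in auto)
    moreover have "v (a + b - t) \<le> (1 - (1 - l)) * v a + (1 - l) * v b"
      unfolding se by (rule convex_onD[OF conv]) (use l A in auto)
    ultimately have "v t + v (a + b - t) \<le> v a + v b" by (simp add: algebra_simps)
    hence "ln (G a) + ln (G b) \<le> ln (G t) + ln (G (a + b - t))" unfolding v_def by simp
    moreover have "G a > 0" "G b > 0" "G t > 0" "G (a + b - t) > 0" using Gpos ab t by auto
    ultimately have "ln (G a * G b) \<le> ln (G t * G (a + b - t))" by (simp add: ln_mult)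
    thus ?thesis using \<open>G a > 0\<close> \<open>G b > 0\<close> \<open>G t > 0\<close> \<open>G (a + b - t) > 0\<close> by simp
  qed
  define c where "c = sqrt (G a * G b)"
  define Psi where "Psi = (\<lambda>t. (F t - F (a + b - t)) / 2 - c * t)"
  have "Psi a \<le> Psi b"
  proof (rule DERIV_nonneg_imp_nondecreasing[of a b Psi])
    show "a \<le> b" using ab by simp
    fix t assume t: "a \<le> t" "t \<le> b"
    have dF: "(F has_real_derivative G y) (at y)" for y
    proof -
      have "((\<lambda>x. PS (cc p) (x^2)) has_real_derivative PS (ee p) (y^2) * (2 * y)) (at y)"
        by (rule derivative_eq_intros | rule p | rule DERIV_ident | rule refl)+ simp
      thus ?thesis unfolding F_def G_def by (simp add: mult.commute mult.left_commute)
    qed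
    have d2: "((\<lambda>t. F (a + b - t)) has_real_derivative G (a + b - t) * (0 - 1)) (at t)"
      by (rule DERIV_chain2[OF dF]) (rule derivative_eq_intros refl | simp)+
    have "(Psi has_real_derivative (G t - G (a + b - t) * (0 - 1)) / 2 - c * 1) (at t)"
      unfolding Psi_def by (rule derivative_eq_intros dF d2 refl DERIV_ident | simp)+
    moreover have "(G t - G (a + b - t) * (0 - 1)) / 2 - c * 1 \<ge> 0"
    proof -
      have pos: "G t > 0" "G (a + b - t) > 0" using Gpos ab t by auto
      have "c \<le> sqrt (G t * G (a + b - t))" unfolding c_def using prod[OF t] by simp
      also have "\<dots> \<le> (G t + G (a + b - t)) / 2" using pos by (intro arith_geo_mean_sqrt) auto
      finally show ?thesis by simp
    qed
    ultimately show "\<exists>y. (Psi has_real_derivative y) (at t) \<and> 0 \<le> y" by blast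
  qed
  hence "(F a - F b) / 2 - c * a \<le> (F b - F a) / 2 - c * b" unfolding Psi_def by simp
  hence "F b - F a \<ge> (b - a) * c" by (simp add: field_simps)
  thus ?thesis unfolding c_def .
qed

lemma deriv_calI: "\<nu> > -1 \<Longrightarrow> deriv (calI \<nu>) x = 2 * x * PS (ee (\<nu>+1)) (x^2)"
  by (rule DERIV_imp_deriv) (rule calI_deriv)

lemma both:
  assumes nu: "\<nu> > -1" and ab: "a > 0" "b > 0"
    and J: "\<And>x. min a b \<le> x \<Longrightarrow> x \<le> max a b \<Longrightarrow> JJ (\<nu>+1) (x^2) \<ge> 0"
  shows "\<bar>calI \<nu> a - calI \<nu> b\<bar> \<ge> \<bar>a - b\<bar> * sqrt (deriv (calI \<nu>) a * deriv (calI \<nu>) b)"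
proof -
  have p: "\<nu> + 1 > 0" using nu by simp
  have e: "calI \<nu> = (\<lambda>x. PS (cc (\<nu> + 1)) (x^2))" using calI_eq by blast
  have d: "deriv (calI \<nu>) = (\<lambda>x. 2 * x * PS (ee (\<nu>+1)) (x^2))" using deriv_calI[OF nu] by blast
  have "deriv (calI \<nu>) a > 0" "deriv (calI \<nu>) b > 0" unfolding d using ab PS_pos[OF p] by auto
  hence s0: "sqrt (deriv (calI \<nu>) a * deriv (calI \<nu>) b) \<ge> 0" by simp
  consider "a < b" | "a = b" | "b < a" by linarith
  thus ?thesis
  proof cases
    case 1
    have m: "PS (cc (\<nu> + 1)) (b^2) - PS (cc (\<nu> + 1)) (a^2) \<ge> (b - a) * sqrt ((2 * a * PS (ee (\<nu>+1)) (a^2)) * (2 * b * PS (ee (\<nu>+1)) (b^2)))"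
      by (rule main_ineq[OF p ab(1) 1]) (use J 1 in auto)
    have "calI \<nu> b - calI \<nu> a \<ge> (b - a) * sqrt (deriv (calI \<nu>) a * deriv (calI \<nu>) b)"
      using m by (simp only: calI_eq deriv_calI[OF nu])
    moreover have "(b - a) * sqrt (deriv (calI \<nu>) a * deriv (calI \<nu>) b) \<ge> 0" using 1 s0 by simp
    ultimately show ?thesis using 1 by simp
  next
    case 2 thus ?thesis by simp
  next
    case 3
    have m: "PS (cc (\<nu> + 1)) (a^2) - PS (cc (\<nu> + 1)) (b^2) \<ge> (a - b) * sqrt ((2 * b * PS (ee (\<nu>+1)) (b^2)) * (2 * a * PS (ee (\<nu>+1)) (a^2)))"
      by (rule main_ineq[OF p ab(2) 3]) (use J 3 in auto)
    have "calI \<nu> a - calI \<nu> b \<ge> (a - b) * sqrt (deriv (calI \<nu>) b * deriv (calI \<nu>) a)"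
      using m by (simp only: calI_eq deriv_calI[OF nu])
    moreover have "(a - b) * sqrt (deriv (calI \<nu>) b * deriv (calI \<nu>) a) \<ge> 0" using 3 s0 by (simp add: mult.commute)
    ultimately show ?thesis using 3 by (simp add: mult.commute)
  qed
qed

theorem corollary1:
  shows "(\<forall>\<nu> a b :: real. -1 < \<nu> \<and> \<nu> \<le> -1/2 \<and> 0 \<le> a \<and> 0 \<le> b \<longrightarrow>
            \<bar>calI \<nu> a - calI \<nu> b\<bar> \<ge> \<bar>a - b\<bar> * sqrt (deriv (calI \<nu>) a * deriv (calI \<nu>) b))
       \<and> (\<forall>\<nu> a b :: real. -1 < \<nu> \<and> a \<in> {0<..<sqrt (2 * (\<nu> + 3))} \<and> b \<in> {0<..<sqrt (2 * (\<nu> + 3))} \<longrightarrow>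
            \<bar>calI \<nu> a - calI \<nu> b\<bar> \<ge> \<bar>a - b\<bar> * sqrt (deriv (calI \<nu>) a * deriv (calI \<nu>) b))"
proof (intro conjI allI impI)
  fix \<nu> a b :: real
  assume h: "-1 < \<nu> \<and> \<nu> \<le> -1/2 \<and> 0 \<le> a \<and> 0 \<le> b"
  hence nu: "\<nu> > -1" and p: "\<nu> + 1 > 0" "\<nu> + 1 \<le> 1/2" by auto
  show "\<bar>calI \<nu> a - calI \<nu> b\<bar> \<ge> \<bar>a - b\<bar> * sqrt (deriv (calI \<nu>) a * deriv (calI \<nu>) b)"
  proof (cases "a = 0 \<or> b = 0")
    case True
    hence "deriv (calI \<nu>) a * deriv (calI \<nu>) b = 0" using deriv_calI[OF nu] by auto
    hence "sqrt (deriv (calI \<nu>) a * deriv (calI \<nu>) b) = 0" by (simp only: real_sqrt_zero)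
    hence "\<bar>a - b\<bar> * sqrt (deriv (calI \<nu>) a * deriv (calI \<nu>) b) = 0" by (simp only: mult_zero_right)
    thus ?thesis by (metis abs_ge_zero)
  next
    case False
    hence ab: "a > 0" "b > 0" using h by auto
    show ?thesis
    proof (rule both[OF nu ab])
      fix x assume "min a b \<le> x" "x \<le> max a b"
      show "JJ (\<nu>+1) (x^2) \<ge> 0"
      proof (cases "x^2 \<le> 2 * (\<nu> + 1 + 2)")
        case True thus ?thesis using JJ_small[OF p(1)] by simp
      next
        case False thus ?thesis using JJ_large[OF p] by simp
      qed
    qed
  qed
next
  fix \<nu> a b :: real
  assume h: "-1 < \<nu> \<and> a \<in> {0<..<sqrt (2 * (\<nu> + 3))} \<and> b \<in> {0<..<sqrt (2 * (\<nu> + 3))}"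
  hence nu: "\<nu> > -1" and p: "\<nu> + 1 > 0" and ab: "a > 0" "b > 0"
    and lt: "a < sqrt (2 * (\<nu> + 3))" "b < sqrt (2 * (\<nu> + 3))" by auto
  show "\<bar>calI \<nu> a - calI \<nu> b\<bar> \<ge> \<bar>a - b\<bar> * sqrt (deriv (calI \<nu>) a * deriv (calI \<nu>) b)"
  proof (rule both[OF nu ab])
    fix x assume x: "min a b \<le> x" "x \<le> max a b"
    have x0: "x \<ge> 0" using x ab by simp
    have "x < sqrt (2 * (\<nu> + 3))" using x lt by (simp add: max_def split: if_splits)
    hence "x^2 < (sqrt (2 * (\<nu> + 3)))^2" using x0 by (intro power_strict_mono) auto
    hence "x^2 < 2 * (\<nu> + 3)" using nu by simp
    thus "JJ (\<nu>+1) (x^2) \<ge> 0" using JJ_small[OF p, of "x^2"] by simp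
  qed
qed

end
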